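(* Let $a,b\in\mathbb{R}$ with $0<a<b$, let $q\geq 1$, $s\in\left(0,\frac1q\right)$, and $\alpha,\lambda\in[0,1]$. Define $$\gamma_1(\alpha,\lambda)=(1-\alpha)\Big[\alpha\lambda-\frac{1-\alpha}{2}\Big],\qquad \gamma_2(\alpha,\lambda)=(\alpha\lambda)^2-\gamma_1(\alpha,\lambda),$$ $$c_1(\alpha,\lambda,s)=(\alpha\lambda)^{s+2}\frac{2}{(s+1)(s+2)}-\alpha\lambda\frac{(1-\alpha)^{s+1}}{s+1}+\frac{(1-\alpha)^{s+2}}{s+2},$$ $$c_2(\alpha,\lambda,s)=(1-\alpha\lambda)^{s+2}\frac{2}{(s+1)(s+2)}-\frac{(1-\alpha\lambda)(1+\alpha^{s+1})}{s+1}+\frac{1+\alpha^{s+2}}{s+2},$$ $$c_3(\alpha,\lambda,s)=\alpha\lambda\frac{(1-\alpha)^{s+1}}{s+1}-\frac{(1-\alpha)^{s+2}}{s+2},\qquad c_4(\alpha,\lambda,s)=\frac{(\alpha\lambda-1)(1-\alpha^{s+1})}{s+1}+\frac{1-\alpha^{s+2}}{s+2},$$ and set $\Delta=\left|\lambda A_\alpha(a^{s+1},b^{s+1})+(1-\lambda)A_\alpha^{s+1}(a,b)-L_{s+1}^{s+1}(a,b)\right|$. Then: (i) if $\alpha\lambda\leq 1-\alpha\leq 1-\lambda(1-\alpha)$, $$\Delta\leq (b-a)(s+1)\Big[\gamma_2^{1-\frac1q}(\alpha,\lambda)\big(c_1(\alpha,\lambda,s)b^{sq}+c_2(\alpha,\lambda,s)a^{sq}\big)^{\frac1q}+\gamma_2^{1-\frac1q}(1-\alpha,\lambda)\big(c_2(1-\alpha,\lambda,s)b^{sq}+c_1(1-\alpha,\lambda,s)a^{sq}\big)^{\frac1q}\Big];$$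 (ii) if $\alpha\lambda\leq 1-\lambda(1-\alpha)\leq 1-\alpha$, $$\Delta\leq (b-a)(s+1)\Big[\gamma_2^{1-\frac1q}(\alpha,\lambda)\big(c_1(\alpha,\lambda,s)b^{sq}+c_2(\alpha,\lambda,s)a^{sq}\big)^{\frac1q}+\gamma_1^{1-\frac1q}(1-\alpha,\lambda)\big(c_4(1-\alpha,\lambda,s)b^{sq}+c_3(1-\alpha,\lambda,s)a^{sq}\big)^{\frac1q}\Big];$$ (iii) if $1-\alpha\leq\alpha\lambda\leq 1-\lambda(1-\alpha)$, $$\Delta\leq (b-a)(s+1)\Big[\gamma_1^{1-\frac1q}(\alpha,\lambda)\big(c_3(\alpha,\lambda,s)b^{sq}+c_4(\alpha,\lambda,s)a^{sq}\big)^{\frac1q}+\gamma_2^{1-\frac1q}(1-\alpha,\lambda)\big(c_2(1-\alpha,\lambda,s)b^{sq}+c_1(1-\alpha,\lambda,s)a^{sq}\big)^{\frac1q}\Big].$$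
   Context: For real $x,y$ and $\alpha\in[0,1]$, the weighted arithmetic mean is $A_\alpha(x,y)=\alpha x+(1-\alpha)y$, and $A_\alpha^{s+1}(x,y)$ denotes $(A_\alpha(x,y))^{s+1}$. For $x,y>0$, $x\neq y$, and $p\in\mathbb{R}\setminus\{-1,0\}$, the $p$-logarithmic mean is $L_p(x,y)=\left(\frac{y^{p+1}-x^{p+1}}{(p+1)(y-x)}\right)^{1/p}$, and $L_{s+1}^{s+1}$ denotes its $(s+1)$-th power. *)

theory Defs
  imports Complex_Main
begin

definition wam :: "real \<Rightarrow> real \<Rightarrow> real \<Rightarrow> real" where
  "wam \<alpha> x y = \<alpha> * x + (1 - \<alpha>) * y"

text \<open>p-logarithmic mean (x, y > 0, x ~= y, p not in {-1, 0}).\<close>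
definition plog_mean :: "real \<Rightarrow> real \<Rightarrow> real \<Rightarrow> real" where
  "plog_mean p x y = ((y powr (p + 1) - x powr (p + 1)) / ((p + 1) * (y - x))) powr (1 / p)"

text \<open>Real power with the usual convention 0^0 = 1 (Isabelle's powr has 0 powr 0 = 0).\<close>
definition rpow :: "real \<Rightarrow> real \<Rightarrow> real" where
  "rpow x e = (if x = 0 \<and> e = 0 then 1 else x powr e)"

definition gam1 :: "real \<Rightarrow> real \<Rightarrow> real" where
  "gam1 \<alpha> l = (1 - \<alpha>) * (\<alpha> * l - (1 - \<alpha>) / 2)"

definition gam2 :: "real \<Rightarrow> real \<Rightarrow> real" where
  "gam2 \<alpha> l = (\<alpha> * l)^2 - gam1 \<alpha> l"

definition c1 :: "real \<Rightarrow> real \<Rightarrow> real \<Rightarrow> real" where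
  "c1 \<alpha> l s = (\<alpha> * l) powr (s + 2) * (2 / ((s + 1) * (s + 2)))
     - \<alpha> * l * ((1 - \<alpha>) powr (s + 1) / (s + 1)) + (1 - \<alpha>) powr (s + 2) / (s + 2)"

definition c2 :: "real \<Rightarrow> real \<Rightarrow> real \<Rightarrow> real" where
  "c2 \<alpha> l s = (1 - \<alpha> * l) powr (s + 2) * (2 / ((s + 1) * (s + 2)))
     - (1 - \<alpha> * l) * (1 + \<alpha> powr (s + 1)) / (s + 1) + (1 + \<alpha> powr (s + 2)) / (s + 2)"

definition c3 :: "real \<Rightarrow> real \<Rightarrow> real \<Rightarrow> real" where
  "c3 \<alpha> l s = \<alpha> * l * ((1 - \<alpha>) powr (s + 1) / (s + 1)) - (1 - \<alpha>) powr (s + 2) / (s + 2)"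

definition c4 :: "real \<Rightarrow> real \<Rightarrow> real \<Rightarrow> real" where
  "c4 \<alpha> l s = (\<alpha> * l - 1) * (1 - \<alpha> powr (s + 1)) / (s + 1) + (1 - \<alpha> powr (s + 2)) / (s + 2)"

end

theory Submission
  imports Defs "HOL-Analysis.Analysis"
begin


lemma young_pt:
  fixes y K q :: real
  assumes "y > 0" "K > 0" "q \<ge> 1"
  shows "y \<le> (1 - 1/q) * K + (1/q) * (K powr (1 - q) * y powr q)"
proof -
  have "(K powr (1 - q) * y powr q) powr (1/q) * K powr (1 - 1/q)
        \<le> (1/q) * (K powr (1 - q) * y powr q) + (1 - 1/q) * K"
    using assms by (intro Youngs_inequality_0) (auto simp: field_simps)
  moreover have "(K powr (1 - q) * y powr q) powr (1/q) * K powr (1 - 1/q) = y"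
  proof -
    have "(K powr (1 - q) * y powr q) powr (1/q) * K powr (1 - 1/q)
      = K powr ((1 - q) * (1/q) + (1 - 1/q)) * y powr (q * (1/q))"
      using assms by (simp add: powr_mult powr_powr powr_add)
    also have "(1 - q) * (1/q) + (1 - 1/q) = 0" using assms by (simp add: field_simps)
    also have "q * (1/q) = 1" using assms by simp
    finally show ?thesis using assms by simp
  qed
  ultimately show ?thesis by simp
qed

lemma ftc:
  fixes F g :: "real \<Rightarrow> real"
  assumes "u \<le> v" "continuous_on {u..v} F"
    "\<And>t. u < t \<Longrightarrow> t < v \<Longrightarrow> (F has_real_derivative g t) (at t)"
  shows "(g has_integral (F v - F u)) {u..v}"
  using assms by (intro fundamental_theorem_of_calculus_interior)
     (auto simp: has_real_derivative_iff_has_vector_derivative)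

lemma absint:
  fixes F g :: "real \<Rightarrow> real"
  assumes "u \<le> v" "continuous_on {u..v} F"
    "\<And>t. u < t \<Longrightarrow> t < v \<Longrightarrow> (F has_real_derivative (t - c) * g t) (at t)"
  shows "c \<le> u \<Longrightarrow> ((\<lambda>t. \<bar>t - c\<bar> * g t) has_integral (F v - F u)) {u..v}"
    and "v \<le> c \<Longrightarrow> ((\<lambda>t. \<bar>t - c\<bar> * g t) has_integral (F u - F v)) {u..v}"
    and "u \<le> c \<Longrightarrow> c \<le> v \<Longrightarrow> ((\<lambda>t. \<bar>t - c\<bar> * g t) has_integral (F u + F v - 2 * F c)) {u..v}"
proof -
  have I: "((\<lambda>t. (t - c) * g t) has_integral (F y - F x)) {x..y}" if "u \<le> x" "x \<le> y" "y \<le> v" for x y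
    using that assms by (intro ftc) (auto intro: continuous_on_subset)
  show "((\<lambda>t. \<bar>t - c\<bar> * g t) has_integral (F v - F u)) {u..v}" if c: "c \<le> u"
    by (rule has_integral_eq[OF _ I[of u v]]) (use c assms(1) in auto)
  show "((\<lambda>t. \<bar>t - c\<bar> * g t) has_integral (F u - F v)) {u..v}" if c: "v \<le> c"
  proof -
    have "((\<lambda>t. -((t - c) * g t)) has_integral (F u - F v)) {u..v}"
      using has_integral_neg[OF I[of u v]] assms(1) c by simp
    then show ?thesis by (rule has_integral_eq[rotated]) (use c in \<open>auto simp: algebra_simps\<close>)
  qed
  show "((\<lambda>t. \<bar>t - c\<bar> * g t) has_integral (F u + F v - 2 * F c)) {u..v}" if c: "u \<le> c" "c \<le> v"
  proof -
    have 1: "((\<lambda>t. \<bar>t - c\<bar> * g t) has_integral (F u - F c)) {u..c}"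
    proof -
      have "((\<lambda>t. -((t - c) * g t)) has_integral (F u - F c)) {u..c}"
        using has_integral_neg[OF I[of u c]] c by simp
      then show ?thesis by (rule has_integral_eq[rotated]) (use c in \<open>auto simp: algebra_simps\<close>)
    qed
    have 2: "((\<lambda>t. \<bar>t - c\<bar> * g t) has_integral (F v - F c)) {c..v}"
      by (rule has_integral_eq[OF _ I[of c v]]) (use c in auto)
    show ?thesis
      using has_integral_combine[OF c 1 2] by (simp add: algebra_simps)
  qed
qed


lemma powr_alg:
  fixes X W q :: real
  assumes "X > 0" "W > 0" "q \<ge> 1"
  defines "k \<equiv> (X/W) powr (1/q)"
  shows "k * W = W powr (1 - 1/q) * X powr (1/q)"
    and "k powr (1-q) * X = W powr (1 - 1/q) * X powr (1/q)"
proof -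
  have k: "k = exp ((1/q)*(ln X - ln W))" unfolding k_def using assms(1,2) by (simp add: powr_def ln_div)
  have T: "W powr (1 - 1/q) * X powr (1/q) = exp ((1 - 1/q) * ln W + (1/q) * ln X)"
    using assms by (simp add: powr_def exp_add)
  have "k * W = exp ((1/q)*(ln X - ln W) + ln W)" using assms(1,2,3) k by (simp add: exp_add)
  also have "(1/q)*(ln X - ln W) + ln W = (1 - 1/q) * ln W + (1/q) * ln X"
    by (simp add: algebra_simps)
  finally show "k * W = W powr (1 - 1/q) * X powr (1/q)" using T by simp
  have "k powr (1-q) * X = exp ((1-q) * ((1/q)*(ln X - ln W)) + ln X)"
    using assms(1,2,3) k by (simp add: exp_add powr_def)
  also have "(1-q) * ((1/q)*(ln X - ln W)) + ln X = (1 - 1/q) * ln W + (1/q) * ln X"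
    using assms by (simp add: field_simps)
  finally show "k powr (1-q) * X = W powr (1 - 1/q) * X powr (1/q)" using T by simp
qed

lemma subadd_powr:
  fixes y z r :: real
  assumes "0 \<le> y" "0 \<le> z" "0 < r" "r \<le> 1"
  shows "(y + z) powr r \<le> y powr r + z powr r"
proof (cases "y + z = 0")
  case True then show ?thesis using assms by simp
next
  case False
  then have p: "y + z > 0" using assms by simp
  have 1: "y/(y+z) \<le> (y/(y+z)) powr r"
    using powr_mono'[of r 1 "y/(y+z)"] assms p by simp
  have 2: "z/(y+z) \<le> (z/(y+z)) powr r"
    using powr_mono'[of r 1 "z/(y+z)"] assms p by simp
  have "(y + z) powr r = (y+z) powr r * (y/(y+z) + z/(y+z))"
    using p by (simp add: add_divide_distrib[symmetric])
  also have "\<dots> \<le> (y+z) powr r * ((y/(y+z)) powr r + (z/(y+z)) powr r)"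
    using 1 2 by (intro mult_left_mono) auto
  also have "\<dots> = y powr r + z powr r"
    using p assms by (simp add: powr_divide distrib_left)
  finally show ?thesis .
qed


lemma powr_succ: "(t::real) \<ge> 0 \<Longrightarrow> t powr (e + 1) = t * t powr e"
  by (cases "t = 0") (auto simp: powr_add)

lemma dpow:
  fixes g :: "real \<Rightarrow> real"
  assumes "(g has_real_derivative m) (at t)" "g t > 0"
  shows "((\<lambda>x. g x powr (e + 1)) has_real_derivative (e + 1) * g t powr e * m) (at t)"
  using DERIV_chain2[OF has_real_derivative_powr[of "g t" "e + 1"] assms(1)] assms(2) by simp

lemma dpow2:
  fixes g :: "real \<Rightarrow> real"
  assumes "(g has_real_derivative m) (at t)" "g t > 0"
  shows "((\<lambda>x. g x powr (s + 2)) has_real_derivative (s + 2) * g t powr (s + 1) * m) (at t)"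
proof -
  have e: "s + 1 + 1 = s + 2" by simp
  show ?thesis using dpow[OF assms, where e = "s + 1"] unfolding e .
qed

lemma algP: assumes "(0::real) < s" shows "(s + 2) * (t * P) * 1 / (s + 2) - c * ((s + 1) * P * 1) / (s + 1) = (t - c) * P"
proof -
  have h: "s + 2 \<noteq> 0" "s + 1 \<noteq> 0" using assms by auto
  have "(s + 2) * (t * P) * 1 / (s + 2) = t * P" using h by simp
  moreover have "c * ((s + 1) * P * 1) / (s + 1) = c * P" using h by simp
  ultimately show ?thesis by (simp add: algebra_simps)
qed

lemma algQ: assumes "(0::real) < s" shows "(s + 2) * (u * P) * (0 - 1) / (s + 2) - (1 - c) * ((s + 1) * P * (0 - 1)) / (s + 1) = ((1 - u) - c) * P"
proof -
  have h: "s + 2 \<noteq> 0" "s + 1 \<noteq> 0" using assms by auto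
  have "(s + 2) * (u * P) * (0 - 1) / (s + 2) = - (u * P)" using h by simp
  moreover have "(1 - c) * ((s + 1) * P * (0 - 1)) / (s + 1) = - ((1 - c) * P)" using h by simp
  ultimately show ?thesis by (simp add: algebra_simps)
qed

lemma algPhi: assumes "(0::real) < s" "a < b" shows "((x * P) + (s + 1) * P * (b - a) * (t - c)) / (b - a)
        - (s + 2) * (x * P) * (b - a) / ((s + 2) * (b - a)^2) = (t - c) * ((s + 1) * P)"
proof -
  have h: "s + 2 \<noteq> 0" "b - a \<noteq> 0" using assms by auto
  have "(s + 2) * (x * P) * (b - a) / ((s + 2) * (b - a)^2) = x * P / (b - a)"
    using h by (simp add: power2_eq_square)
  moreover have "((x * P) + (s + 1) * P * (b - a) * (t - c)) / (b - a) = x * P / (b - a) + (t - c) * ((s + 1) * P)"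
    using h by (simp add: add_divide_distrib)
  ultimately show ?thesis by simp
qed

lemma derP:
  fixes s c t :: real
  assumes "0 < s" "0 < t"
  shows "((\<lambda>t. t powr (s + 2) / (s + 2) - c * t powr (s + 1) / (s + 1)) has_real_derivative (t - c) * t powr s) (at t)"
  by (rule DERIV_cong[OF DERIV_diff[OF DERIV_cdivide[OF dpow2[OF DERIV_ident]]
          DERIV_cdivide[OF DERIV_cmult[OF dpow[OF DERIV_ident]]]]])
     (use assms powr_succ[of t s] algP[of s t "t powr s" c] in simp_all)

lemma derQ:
  fixes s c t :: real
  assumes "0 < s" "t < 1"
  shows "((\<lambda>t. (1 - t) powr (s + 2) / (s + 2) - (1 - c) * (1 - t) powr (s + 1) / (s + 1)) has_real_derivative (t - c) * (1 - t) powr s) (at t)"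
proof -
  have g: "((\<lambda>x. 1 - x) has_real_derivative (0 - 1)) (at t)" by (intro DERIV_diff DERIV_const DERIV_ident)
  show ?thesis
  by (rule DERIV_cong[OF DERIV_diff[OF DERIV_cdivide[OF dpow2[OF g]]
          DERIV_cdivide[OF DERIV_cmult[OF dpow[OF g]]]]])
     (use assms powr_succ[of "1 - t" s] algQ[of s "1 - t" "(1 - t) powr s" c] in simp_all)
qed

lemma derPhi:
  fixes s c t a b :: real
  assumes "0 < s" "0 < t * b + (1 - t) * a" "a < b"
  shows "((\<lambda>t. (t - c) * (t * b + (1 - t) * a) powr (s + 1) / (b - a) - (t * b + (1 - t) * a) powr (s + 2) / ((s + 2) * (b - a)^2))
     has_real_derivative (t - c) * ((s + 1) * (t * b + (1 - t) * a) powr s)) (at t)"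
proof -
  have g: "((\<lambda>t. t * b + (1 - t) * a) has_real_derivative (b - a)) (at t)"
    by (auto intro!: derivative_eq_intros simp: algebra_simps)
  have d3: "((\<lambda>x. x - c) has_real_derivative (1 - 0)) (at t)" by (intro DERIV_diff DERIV_const DERIV_ident)
  show ?thesis
  by (rule DERIV_cong[OF DERIV_diff[OF DERIV_cdivide[OF DERIV_mult[OF d3 dpow[OF g]]] DERIV_cdivide[OF dpow2[OF g]]]])
     (use assms powr_succ[of "t * b + (1 - t) * a" s] algPhi[of s a b "t * b + (1 - t) * a" "(t * b + (1 - t) * a) powr s" t c] in simp_all)
qed
lemma piece:
  fixes a b q s u v c W Cb Ca I :: real
  assumes ab: "0 < a" "a < b" and q: "1 \<le> q" and s: "0 < s" "s * q \<le> 1"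
    and uv: "0 \<le> u" "u \<le> v" "v \<le> 1"
    and hW: "((\<lambda>t. \<bar>t - c\<bar>) has_integral W) {u..v}"
    and hB: "((\<lambda>t. \<bar>t - c\<bar> * t powr s) has_integral Cb) {u..v}"
    and hA: "((\<lambda>t. \<bar>t - c\<bar> * (1 - t) powr s) has_integral Ca) {u..v}"
    and hI: "((\<lambda>t. (t - c) * ((s + 1) * (t * b + (1 - t) * a) powr s)) has_integral I) {u..v}"
  shows "\<bar>I\<bar> \<le> (s + 1) * (rpow W (1 - 1/q) * (Cb * b powr (s*q) + Ca * a powr (s*q)) powr (1/q))"
proof -
  have ssq: "s \<le> s * q" using mult_left_mono[of 1 q s] s q by simp
  have s1: "s \<le> 1" using ssq s by linarith
  define X where "X = Cb * b powr (s*q) + Ca * a powr (s*q)"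
  define \<phi> where "\<phi> t = (s + 1) * (t * b + (1 - t) * a) powr s" for t
  define ch where "ch t = t powr s * b powr (s*q) + (1 - t) powr s * a powr (s*q)" for t
  have xr: "a \<le> t * b + (1 - t) * a" "t * b + (1 - t) * a \<le> b" if "t \<in> {u..v}" for t
  proof -
    have "0 \<le> t" "t \<le> 1" using that uv by auto
    then have "0 \<le> (b - a) * t" "0 \<le> (b - a) * (1 - t)" using ab by auto
    then show "a \<le> t * b + (1 - t) * a" "t * b + (1 - t) * a \<le> b"
      by (simp_all add: algebra_simps)
  qed
  have phipos: "\<phi> t > 0" if "t \<in> {u..v}" for t
    using xr[OF that] ab s unfolding \<phi>_def by auto
  have phib: "\<phi> t \<le> (s + 1) * b powr s" if "t \<in> {u..v}" for t
    using xr[OF that] ab s unfolding \<phi>_def by (auto intro!: powr_mono2)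
  have chi: "\<phi> t powr q \<le> (s + 1) powr q * ch t" if t: "t \<in> {u..v}" for t
  proof -
    have t01: "0 \<le> t" "t \<le> 1" using t uv by auto
    have x0: "0 < t * b + (1 - t) * a" using xr[OF t] ab by auto
    have "\<phi> t powr q = (s + 1) powr q * (t * b + (1 - t) * a) powr (s * q)"
      unfolding \<phi>_def using x0 s by (simp add: powr_mult powr_powr)
    also have "(t * b + (1 - t) * a) powr (s * q) \<le> (t * b) powr (s*q) + ((1 - t) * a) powr (s*q)"
      using t01 ab s q by (intro subadd_powr) (auto intro: mult_pos_pos)
    also have "\<dots> = t powr (s*q) * b powr (s*q) + (1 - t) powr (s*q) * a powr (s*q)"
      using t01 ab by (simp add: powr_mult)
    also have "\<dots> \<le> ch t"
      unfolding ch_def using t01 ab s q ssq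
      by (intro add_mono mult_right_mono powr_mono') auto
    finally show ?thesis using s by (auto intro: mult_left_mono)
  qed
  have W0: "0 \<le> W" by (rule has_integral_nonneg[OF hW]) auto
  have Cb0: "0 \<le> Cb" by (rule has_integral_nonneg[OF hB]) auto
  have Ca0: "0 \<le> Ca" by (rule has_integral_nonneg[OF hA]) auto
  have X0: "0 \<le> X" unfolding X_def using Cb0 Ca0 by auto
  have hX: "((\<lambda>t. \<bar>t - c\<bar> * ch t) has_integral X) {u..v}"
  proof -
    have "((\<lambda>t. (\<bar>t - c\<bar> * t powr s) * b powr (s*q) + (\<bar>t - c\<bar> * (1 - t) powr s) * a powr (s*q))
       has_integral (Cb * b powr (s*q) + Ca * a powr (s*q))) {u..v}"
      by (intro has_integral_add has_integral_mult_left hB hA)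
    then show ?thesis unfolding X_def ch_def
      by (rule has_integral_eq[rotated]) (auto simp: algebra_simps)
  qed
  have absI: "\<bar>I\<bar> \<le> J" if hJ: "((\<lambda>t. \<bar>t - c\<bar> * h t) has_integral J) {u..v}"
     and hh: "\<And>t. t \<in> {u..v} \<Longrightarrow> \<phi> t \<le> h t" for h J
  proof -
    have le: "(t - c) * \<phi> t \<le> \<bar>t - c\<bar> * h t" "- ((t - c) * \<phi> t) \<le> \<bar>t - c\<bar> * h t"
      if t: "t \<in> {u..v}" for t
    proof -
      have p: "0 < \<phi> t" using phipos[OF t] .
      have "(t - c) * \<phi> t \<le> \<bar>t - c\<bar> * \<phi> t" using p by (intro mult_right_mono) auto
      moreover have "- ((t - c) * \<phi> t) \<le> \<bar>t - c\<bar> * \<phi> t" using p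
        by (simp add: mult_right_mono flip: mult_minus_left)
      moreover have "\<bar>t - c\<bar> * \<phi> t \<le> \<bar>t - c\<bar> * h t" by (intro mult_left_mono hh t) auto
      ultimately show "(t - c) * \<phi> t \<le> \<bar>t - c\<bar> * h t" "- ((t - c) * \<phi> t) \<le> \<bar>t - c\<bar> * h t"
        by linarith+
    qed
    have hI': "((\<lambda>t. (t - c) * \<phi> t) has_integral I) {u..v}" using hI unfolding \<phi>_def .
    have "I \<le> J" by (rule has_integral_le[OF hI' hJ]) (rule le(1))
    moreover have "-I \<le> J" by (rule has_integral_le[OF has_integral_neg[OF hI'] that(1)]) (rule le(2))
    ultimately show ?thesis by linarith
  qed
  have RHS0: "0 \<le> (s + 1) * (rpow W (1 - 1/q) * X powr (1/q))"
    using s by (auto simp: rpow_def)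
  show ?thesis
  proof (cases "W = 0")
    case True
    have "((\<lambda>t. \<bar>t - c\<bar> * ((s + 1) * b powr s)) has_integral W * ((s + 1) * b powr s)) {u..v}"
      using has_integral_mult_left[OF hW] by simp
    then have "\<bar>I\<bar> \<le> W * ((s + 1) * b powr s)" by (rule absI) (rule phib)
    then show ?thesis using True RHS0 unfolding X_def by simp
  next
    case False
    then have Wp: "W > 0" using W0 by simp
    have "((\<lambda>t. \<bar>t - c\<bar> * a powr (s*q)) has_integral W * a powr (s*q)) {u..v}"
      using has_integral_mult_left[OF hW] by simp
    then have "W * a powr (s*q) \<le> X"
    proof (rule has_integral_le[OF _ hX])
      fix t assume t: "t \<in> {u..v}"
      have t01: "0 \<le> t" "t \<le> 1" using t uv by auto
      have "t \<le> t powr s" using powr_mono'[of s 1 t] t01 s1 by simp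
      moreover have "1 - t \<le> (1 - t) powr s" using powr_mono'[of s 1 "1 - t"] t01 s1 by simp
      moreover have "a powr (s*q) \<le> b powr (s*q)" using ab ssq s by (intro powr_mono2) auto
      ultimately have "t * a powr (s*q) \<le> t powr s * b powr (s*q)"
          "(1 - t) * a powr (s*q) \<le> (1 - t) powr s * a powr (s*q)"
        using t01 by (auto intro!: mult_mono)
      then have "t * a powr (s*q) + (1 - t) * a powr (s*q) \<le> ch t" unfolding ch_def by linarith
      then have "a powr (s*q) \<le> ch t" by (simp add: algebra_simps)
      then show "\<bar>t - c\<bar> * a powr (s*q) \<le> \<bar>t - c\<bar> * ch t" by (intro mult_left_mono) auto
    qed
    then have Xp: "X > 0" using Wp ab by (smt (verit) mult_pos_pos powr_gt_zero)
    define k where "k = (X / W) powr (1/q)"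
    define K where "K = (s + 1) * k"
    have kp: "k > 0" unfolding k_def using Xp Wp by simp
    have Kp: "K > 0" unfolding K_def using kp s by simp
    define \<alpha>0 where "\<alpha>0 = (1 - 1/q) * K"
    define \<beta>0 where "\<beta>0 = (1/q) * K powr (1 - q) * (s + 1) powr q"
    have "((\<lambda>t. \<alpha>0 * \<bar>t - c\<bar> + \<beta>0 * (\<bar>t - c\<bar> * ch t)) has_integral (\<alpha>0 * W + \<beta>0 * X)) {u..v}"
      by (intro has_integral_add has_integral_mult_right hW hX)
    then have "((\<lambda>t. \<bar>t - c\<bar> * (\<alpha>0 + \<beta>0 * ch t)) has_integral (\<alpha>0 * W + \<beta>0 * X)) {u..v}"
      by (rule has_integral_eq[rotated]) (auto simp: algebra_simps)
    then have "\<bar>I\<bar> \<le> \<alpha>0 * W + \<beta>0 * X"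
    proof (rule absI)
      fix t assume t: "t \<in> {u..v}"
      have "\<phi> t \<le> (1 - 1/q) * K + (1/q) * (K powr (1 - q) * \<phi> t powr q)"
        by (rule young_pt) (use phipos[OF t] Kp q in auto)
      also have "\<dots> \<le> (1 - 1/q) * K + (1/q) * (K powr (1 - q) * ((s + 1) powr q * ch t))"
        using chi[OF t] q by (intro add_left_mono mult_left_mono) auto
      finally show "\<phi> t \<le> \<alpha>0 + \<beta>0 * ch t" unfolding \<alpha>0_def \<beta>0_def by (simp add: algebra_simps)
    qed
    also have "\<alpha>0 * W + \<beta>0 * X = (s + 1) * (W powr (1 - 1/q) * X powr (1/q))"
    proof -
      have e1: "k * W = W powr (1 - 1/q) * X powr (1/q)"
        and e2: "k powr (1-q) * X = W powr (1 - 1/q) * X powr (1/q)"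
        using powr_alg[OF Xp Wp q] unfolding k_def by auto
      have "K powr (1 - q) * (s + 1) powr q = (s + 1) * k powr (1 - q)"
        unfolding K_def using s kp by (simp add: powr_mult powr_add[symmetric])
      then have "\<beta>0 * X = (1/q) * (s + 1) * (k powr (1-q) * X)" unfolding \<beta>0_def by simp
      also have "\<dots> = (1/q) * (s + 1) * (W powr (1 - 1/q) * X powr (1/q))" by (simp add: e2)
      finally have b: "\<beta>0 * X = (1/q) * (s + 1) * (W powr (1 - 1/q) * X powr (1/q))" .
      have a: "\<alpha>0 * W = (1 - 1/q) * (s + 1) * (W powr (1 - 1/q) * X powr (1/q))"
      proof -
        have "\<alpha>0 * W = (1 - 1/q) * (s + 1) * (k * W)" unfolding \<alpha>0_def K_def by (simp add: algebra_simps add_divide_distrib)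
        then show ?thesis by (simp only: e1)
      qed
      show ?thesis unfolding a b by (simp add: algebra_simps)
    qed
    finally show ?thesis using Wp unfolding X_def rpow_def by simp
  qed
qed

definition Pf :: "real \<Rightarrow> real \<Rightarrow> real \<Rightarrow> real" where
  "Pf s c t = t powr (s + 2) / (s + 2) - c * t powr (s + 1) / (s + 1)"

definition Qf :: "real \<Rightarrow> real \<Rightarrow> real \<Rightarrow> real" where
  "Qf s c t = (1 - t) powr (s + 2) / (s + 2) - (1 - c) * (1 - t) powr (s + 1) / (s + 1)"

definition Phif :: "real \<Rightarrow> real \<Rightarrow> real \<Rightarrow> real \<Rightarrow> real \<Rightarrow> real" where
  "Phif s a b c t = (t - c) * (t * b + (1 - t) * a) powr (s + 1) / (b - a)
      - (t * b + (1 - t) * a) powr (s + 2) / ((s + 2) * (b - a)^2)"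

lemma has_integral_val: "(f has_integral x) S \<Longrightarrow> x = y \<Longrightarrow> (f has_integral y) S"
  by simp

lemma intW:
  fixes u v c :: real
  assumes "u \<le> v"
  shows "c \<le> u \<Longrightarrow> ((\<lambda>t. \<bar>t - c\<bar>) has_integral ((v - c)^2/2 - (u - c)^2/2)) {u..v}"
    and "v \<le> c \<Longrightarrow> ((\<lambda>t. \<bar>t - c\<bar>) has_integral ((u - c)^2/2 - (v - c)^2/2)) {u..v}"
    and "u \<le> c \<Longrightarrow> c \<le> v \<Longrightarrow> ((\<lambda>t. \<bar>t - c\<bar>) has_integral ((u - c)^2/2 + (v - c)^2/2)) {u..v}"
proof -
  have cont: "continuous_on {u..v} (\<lambda>t. (t - c)^2/2)" by (intro continuous_intros) auto
  have der: "((\<lambda>t. (t - c)^2/2) has_real_derivative (t - c) * 1) (at t)" for t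
    by (auto intro!: derivative_eq_intros)
  note A = absint[OF assms cont der]
  show "c \<le> u \<Longrightarrow> ((\<lambda>t. \<bar>t - c\<bar>) has_integral ((v - c)^2/2 - (u - c)^2/2)) {u..v}"
    using A(1) by simp
  show "v \<le> c \<Longrightarrow> ((\<lambda>t. \<bar>t - c\<bar>) has_integral ((u - c)^2/2 - (v - c)^2/2)) {u..v}"
    using A(2) by simp
  show "u \<le> c \<Longrightarrow> c \<le> v \<Longrightarrow> ((\<lambda>t. \<bar>t - c\<bar>) has_integral ((u - c)^2/2 + (v - c)^2/2)) {u..v}"
    using A(3) by simp
qed

lemma intB:
  fixes u v c s :: real
  assumes "0 \<le> u" "u \<le> v" "0 < s"
  shows "c \<le> u \<Longrightarrow> ((\<lambda>t. \<bar>t - c\<bar> * t powr s) has_integral (Pf s c v - Pf s c u)) {u..v}"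
    and "v \<le> c \<Longrightarrow> ((\<lambda>t. \<bar>t - c\<bar> * t powr s) has_integral (Pf s c u - Pf s c v)) {u..v}"
    and "u \<le> c \<Longrightarrow> c \<le> v \<Longrightarrow> ((\<lambda>t. \<bar>t - c\<bar> * t powr s) has_integral (Pf s c u + Pf s c v - 2 * Pf s c c)) {u..v}"
proof -
  have cont: "continuous_on {u..v} (Pf s c)" unfolding Pf_def
    using assms by (intro continuous_intros continuous_on_powr') auto
  have der: "(Pf s c has_real_derivative (t - c) * t powr s) (at t)" if "u < t" "t < v" for t
    unfolding Pf_def[abs_def] using derP[of s t c] that assms by simp
  note A = absint[OF assms(2) cont der]
  show "c \<le> u \<Longrightarrow> ((\<lambda>t. \<bar>t - c\<bar> * t powr s) has_integral (Pf s c v - Pf s c u)) {u..v}"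
    using A(1) by simp
  show "v \<le> c \<Longrightarrow> ((\<lambda>t. \<bar>t - c\<bar> * t powr s) has_integral (Pf s c u - Pf s c v)) {u..v}"
    using A(2) by simp
  show "u \<le> c \<Longrightarrow> c \<le> v \<Longrightarrow> ((\<lambda>t. \<bar>t - c\<bar> * t powr s) has_integral (Pf s c u + Pf s c v - 2 * Pf s c c)) {u..v}"
    using A(3) by simp
qed

lemma intA:
  fixes u v c s :: real
  assumes "u \<le> v" "v \<le> 1" "0 < s"
  shows "c \<le> u \<Longrightarrow> ((\<lambda>t. \<bar>t - c\<bar> * (1 - t) powr s) has_integral (Qf s c v - Qf s c u)) {u..v}"
    and "v \<le> c \<Longrightarrow> ((\<lambda>t. \<bar>t - c\<bar> * (1 - t) powr s) has_integral (Qf s c u - Qf s c v)) {u..v}"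
    and "u \<le> c \<Longrightarrow> c \<le> v \<Longrightarrow> ((\<lambda>t. \<bar>t - c\<bar> * (1 - t) powr s) has_integral (Qf s c u + Qf s c v - 2 * Qf s c c)) {u..v}"
proof -
  have cont: "continuous_on {u..v} (Qf s c)" unfolding Qf_def
    using assms by (intro continuous_intros continuous_on_powr') auto
  have der: "(Qf s c has_real_derivative (t - c) * (1 - t) powr s) (at t)" if "u < t" "t < v" for t
    unfolding Qf_def[abs_def] using derQ[of s t c] that assms by simp
  note A = absint[OF assms(1) cont der]
  show "c \<le> u \<Longrightarrow> ((\<lambda>t. \<bar>t - c\<bar> * (1 - t) powr s) has_integral (Qf s c v - Qf s c u)) {u..v}"
    using A(1) by simp
  show "v \<le> c \<Longrightarrow> ((\<lambda>t. \<bar>t - c\<bar> * (1 - t) powr s) has_integral (Qf s c u - Qf s c v)) {u..v}"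
    using A(2) by simp
  show "u \<le> c \<Longrightarrow> c \<le> v \<Longrightarrow> ((\<lambda>t. \<bar>t - c\<bar> * (1 - t) powr s) has_integral (Qf s c u + Qf s c v - 2 * Qf s c c)) {u..v}"
    using A(3) by simp
qed

lemma intPhi:
  fixes u v c s a b :: real
  assumes "0 \<le> u" "u \<le> v" "v \<le> 1" "0 < s" "0 < a" "a < b"
  shows "((\<lambda>t. (t - c) * ((s + 1) * (t * b + (1 - t) * a) powr s)) has_integral (Phif s a b c v - Phif s a b c u)) {u..v}"
proof -
  have xp: "0 < t * b + (1 - t) * a" if "0 \<le> t" "t \<le> 1" for t
  proof -
    have "0 \<le> (b - a) * t" using that assms by auto
    then show ?thesis using assms by (simp add: algebra_simps)
  qed
  have cx: "continuous_on {u..v} (\<lambda>t. t * b + (1 - t) * a)" by (intro continuous_intros)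
  have nz: "\<forall>t\<in>{u..v}. t * b + (1 - t) * a \<noteq> 0"
  proof
    fix t assume "t \<in> {u..v}"
    then have "0 \<le> t" "t \<le> 1" using assms by auto
    from xp[OF this] show "t * b + (1 - t) * a \<noteq> 0" by simp
  qed
  have p1: "continuous_on {u..v} (\<lambda>t. (t * b + (1 - t) * a) powr (s + 1))"
    by (rule continuous_on_powr[OF cx continuous_on_const nz])
  have p2: "continuous_on {u..v} (\<lambda>t. (t * b + (1 - t) * a) powr (s + 2))"
    by (rule continuous_on_powr[OF cx continuous_on_const nz])
  have cont: "continuous_on {u..v} (Phif s a b c)" unfolding Phif_def
    using assms by (intro continuous_on_diff continuous_on_divide continuous_on_mult p1 p2 continuous_on_const continuous_on_id) auto
  have der: "(Phif s a b c has_real_derivative (t - c) * ((s + 1) * (t * b + (1 - t) * a) powr s)) (at t)"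
    if "u < t" "t < v" for t
    unfolding Phif_def[abs_def] using derPhi[of s t b a c] xp[of t] that assms by simp
  show ?thesis by (rule ftc[OF assms(2) cont der])
qed

lemma pw2: "(x::real) \<ge> 0 \<Longrightarrow> x powr (s + 2) = x * x powr (s + 1)"
proof -
  assume "x \<ge> 0"
  then have "x powr ((s + 1) + 1) = x * x powr (s + 1)" by (rule powr_succ)
  moreover have "(s + 1) + 1 = s + 2" by simp
  ultimately show ?thesis by simp
qed

theorem mainTheorem7:
  fixes a b q s \<alpha> l :: real
  assumes "0 < a" and "a < b" and "1 \<le> q" and "0 < s" and "s < 1 / q"
    and "0 \<le> \<alpha>" and "\<alpha> \<le> 1" and "0 \<le> l" and "l \<le> 1"
  defines "\<Delta> \<equiv> \<bar>l * wam \<alpha> (a powr (s + 1)) (b powr (s + 1))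
                    + (1 - l) * (wam \<alpha> a b) powr (s + 1)
                    - (plog_mean (s + 1) a b) powr (s + 1)\<bar>"
  shows
    "(\<alpha> * l \<le> 1 - \<alpha> \<and> 1 - \<alpha> \<le> 1 - l * (1 - \<alpha>) \<longrightarrow>
       \<Delta> \<le> (b - a) * (s + 1) *
         (rpow (gam2 \<alpha> l) (1 - 1 / q) *
            (c1 \<alpha> l s * b powr (s * q) + c2 \<alpha> l s * a powr (s * q)) powr (1 / q)
          + rpow (gam2 (1 - \<alpha>) l) (1 - 1 / q) *
            (c2 (1 - \<alpha>) l s * b powr (s * q) + c1 (1 - \<alpha>) l s * a powr (s * q)) powr (1 / q)))
     \<and> (\<alpha> * l \<le> 1 - l * (1 - \<alpha>) \<and> 1 - l * (1 - \<alpha>) \<le> 1 - \<alpha> \<longrightarrow>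
       \<Delta> \<le> (b - a) * (s + 1) *
         (rpow (gam2 \<alpha> l) (1 - 1 / q) *
            (c1 \<alpha> l s * b powr (s * q) + c2 \<alpha> l s * a powr (s * q)) powr (1 / q)
          + rpow (gam1 (1 - \<alpha>) l) (1 - 1 / q) *
            (c4 (1 - \<alpha>) l s * b powr (s * q) + c3 (1 - \<alpha>) l s * a powr (s * q)) powr (1 / q)))
     \<and> (1 - \<alpha> \<le> \<alpha> * l \<and> \<alpha> * l \<le> 1 - l * (1 - \<alpha>) \<longrightarrow>
       \<Delta> \<le> (b - a) * (s + 1) *
         (rpow (gam1 \<alpha> l) (1 - 1 / q) *
            (c3 \<alpha> l s * b powr (s * q) + c4 \<alpha> l s * a powr (s * q)) powr (1 / q)
          + rpow (gam2 (1 - \<alpha>) l) (1 - 1 / q) *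
            (c2 (1 - \<alpha>) l s * b powr (s * q) + c1 (1 - \<alpha>) l s * a powr (s * q)) powr (1 / q)))"
proof -
  note ab = assms(1,2)
  have q: "1 \<le> q" by fact
  have s: "0 < s" by fact
  have sq: "s * q \<le> 1" using assms(3,5) by (simp add: field_simps)
  define c where "c = \<alpha> * l"
  define d where "d = 1 - (1 - \<alpha>) * l"
  have c0: "0 \<le> c" "c \<le> 1" unfolding c_def using assms(6-9) by (auto simp: mult_le_one)
  have d0: "0 \<le> d" "d \<le> 1" unfolding d_def using assms(6-9) by (auto simp: mult_le_one)
  have al: "0 \<le> 1 - \<alpha>" "1 - \<alpha> \<le> 1" using assms(6,7) by auto
  define I1 where "I1 = Phif s a b c (1 - \<alpha>) - Phif s a b c 0"
  define I2 where "I2 = Phif s a b d 1 - Phif s a b d (1 - \<alpha>)"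
  have hI1: "((\<lambda>t. (t - c) * ((s + 1) * (t * b + (1 - t) * a) powr s)) has_integral I1) {0..1 - \<alpha>}"
    unfolding I1_def by (rule intPhi) (use al s ab in auto)
  have hI2: "((\<lambda>t. (t - d) * ((s + 1) * (t * b + (1 - t) * a) powr s)) has_integral I2) {1 - \<alpha>..1}"
    unfolding I2_def by (rule intPhi) (use al s ab assms(6) in auto)
  define i1 where "i1 = 1 / (s + 1)"
  define i2 where "i2 = 1 / (s + 2)"
  have r1: "X / (s + 1) = X * i1" for X unfolding i1_def by simp
  have r2: "X / (s + 2) = X * i2" for X unfolding i2_def by simp
  have r12: "X / ((s + 1) * (s + 2)) = X * i1 - X * i2" for X
    unfolding i1_def i2_def using s by (simp add: field_simps)
  have e1: "1 - (1 - \<alpha>) = \<alpha>" by simp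
  have ed: "1 - d = (1 - \<alpha>) * l" unfolding d_def by simp
  have ec: "1 - (\<alpha> * l) = 1 - c" unfolding c_def by simp
  have pc: "c powr (s + 2) = c * c powr (s + 1)" using c0 by (intro pw2) auto
  have pd: "d powr (s + 2) = d * d powr (s + 1)" using d0 by (intro pw2) auto
  have pa: "\<alpha> powr (s + 2) = \<alpha> * \<alpha> powr (s + 1)" using assms(6) by (intro pw2) auto
  have pa': "(1 - \<alpha>) powr (s + 2) = (1 - \<alpha>) * (1 - \<alpha>) powr (s + 1)" using al by (intro pw2) auto
  have p1c: "(1 - c) powr (s + 2) = (1 - c) * (1 - c) powr (s + 1)" using c0 by (intro pw2) auto
  have p1d: "((1 - \<alpha>) * l) powr (s + 2) = ((1 - \<alpha>) * l) * ((1 - \<alpha>) * l) powr (s + 1)"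
    using al assms(8) by (intro pw2) auto
  have P1A: "\<bar>I1\<bar> \<le> (s + 1) * (rpow (gam2 \<alpha> l) (1 - 1/q) * (c1 \<alpha> l s * b powr (s*q) + c2 \<alpha> l s * a powr (s*q)) powr (1/q))"
    if h: "c \<le> 1 - \<alpha>"
  proof (rule piece[OF ab q s sq _ _ _ _ _ _ hI1])
    show "((\<lambda>t. \<bar>t - c\<bar>) has_integral gam2 \<alpha> l) {0..1 - \<alpha>}"
      by (rule has_integral_val[OF intW(3)]) (use h c0 al in \<open>auto simp: gam2_def gam1_def c_def power2_eq_square field_simps\<close>)
    show "((\<lambda>t. \<bar>t - c\<bar> * t powr s) has_integral c1 \<alpha> l s) {0..1 - \<alpha>}"
      apply (rule has_integral_val[OF intB(3)])
      using h c0 al s apply (auto)[5]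
      unfolding Pf_def c1_def c_def[symmetric]
      apply (simp only: r12 r1 r2 pc pa' powr_0)
      apply (simp add: algebra_simps)?
      done
    show "((\<lambda>t. \<bar>t - c\<bar> * (1 - t) powr s) has_integral c2 \<alpha> l s) {0..1 - \<alpha>}"
      apply (rule has_integral_val[OF intA(3)])
      using h c0 al s apply (auto)[5]
      unfolding Qf_def c2_def c_def[symmetric] ec
      apply (simp only: r12 r1 r2 p1c pa e1 diff_zero powr_one_eq_one)
      apply (simp add: algebra_simps)?
      done
  qed (use al in auto)
  have P1B: "\<bar>I1\<bar> \<le> (s + 1) * (rpow (gam1 \<alpha> l) (1 - 1/q) * (c3 \<alpha> l s * b powr (s*q) + c4 \<alpha> l s * a powr (s*q)) powr (1/q))"
    if h: "1 - \<alpha> \<le> c"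
  proof (rule piece[OF ab q s sq _ _ _ _ _ _ hI1])
    show "((\<lambda>t. \<bar>t - c\<bar>) has_integral gam1 \<alpha> l) {0..1 - \<alpha>}"
      by (rule has_integral_val[OF intW(2)]) (use h c0 al in \<open>auto simp: gam2_def gam1_def c_def power2_eq_square field_simps\<close>)
    show "((\<lambda>t. \<bar>t - c\<bar> * t powr s) has_integral c3 \<alpha> l s) {0..1 - \<alpha>}"
      apply (rule has_integral_val[OF intB(2)])
      using h c0 al s apply (auto)[4]
      unfolding Pf_def c3_def c_def[symmetric]
      apply (simp only: r12 r1 r2 pc pa' powr_0)
      apply (simp add: algebra_simps)?
      done
    show "((\<lambda>t. \<bar>t - c\<bar> * (1 - t) powr s) has_integral c4 \<alpha> l s) {0..1 - \<alpha>}"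
      apply (rule has_integral_val[OF intA(2)])
      using h c0 al s apply (auto)[4]
      unfolding Qf_def c4_def c_def[symmetric] ec
      apply (simp only: r12 r1 r2 p1c pa e1 diff_zero powr_one_eq_one)
      apply (simp add: algebra_simps)?
      done
  qed (use al in auto)
  have P2A: "\<bar>I2\<bar> \<le> (s + 1) * (rpow (gam2 (1 - \<alpha>) l) (1 - 1/q) * (c2 (1 - \<alpha>) l s * b powr (s*q) + c1 (1 - \<alpha>) l s * a powr (s*q)) powr (1/q))"
    if h: "1 - \<alpha> \<le> d"
  proof (rule piece[OF ab q s sq _ _ _ _ _ _ hI2])
    show "((\<lambda>t. \<bar>t - d\<bar>) has_integral gam2 (1 - \<alpha>) l) {1 - \<alpha>..1}"
      by (rule has_integral_val[OF intW(3)]) (use h d0 al in \<open>auto simp: gam2_def gam1_def d_def power2_eq_square field_simps\<close>)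
    show "((\<lambda>t. \<bar>t - d\<bar> * t powr s) has_integral c2 (1 - \<alpha>) l s) {1 - \<alpha>..1}"
      apply (rule has_integral_val[OF intB(3)])
      using h d0 al s apply (auto)[5]
      unfolding Pf_def c2_def d_def[symmetric]
      apply (simp only: r12 r1 r2 pd pa' powr_one_eq_one)
      apply (simp add: algebra_simps)?
      done
    show "((\<lambda>t. \<bar>t - d\<bar> * (1 - t) powr s) has_integral c1 (1 - \<alpha>) l s) {1 - \<alpha>..1}"
      apply (rule has_integral_val[OF intA(3)])
      using h d0 al s apply (auto)[5]
      unfolding Qf_def c1_def ed e1
      apply (simp only: r12 r1 r2 p1d pa diff_self powr_0)
      apply (simp add: algebra_simps)?
      done
  qed (use al in auto)
  have P2B: "\<bar>I2\<bar> \<le> (s + 1) * (rpow (gam1 (1 - \<alpha>) l) (1 - 1/q) * (c4 (1 - \<alpha>) l s * b powr (s*q) + c3 (1 - \<alpha>) l s * a powr (s*q)) powr (1/q))"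
    if h: "d \<le> 1 - \<alpha>"
  proof (rule piece[OF ab q s sq _ _ _ _ _ _ hI2])
    show "((\<lambda>t. \<bar>t - d\<bar>) has_integral gam1 (1 - \<alpha>) l) {1 - \<alpha>..1}"
      by (rule has_integral_val[OF intW(1)]) (use h d0 al in \<open>auto simp: gam2_def gam1_def d_def power2_eq_square field_simps\<close>)
    show "((\<lambda>t. \<bar>t - d\<bar> * t powr s) has_integral c4 (1 - \<alpha>) l s) {1 - \<alpha>..1}"
      apply (rule has_integral_val[OF intB(1)])
      using h d0 al s apply (auto)[4]
      unfolding Pf_def c4_def
      apply (simp only: r12 r1 r2 pa' powr_one_eq_one)
      apply (simp add: algebra_simps d_def)?
      done
    show "((\<lambda>t. \<bar>t - d\<bar> * (1 - t) powr s) has_integral c3 (1 - \<alpha>) l s) {1 - \<alpha>..1}"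
      apply (rule has_integral_val[OF intA(1)])
      using h d0 al s apply (auto)[4]
      unfolding Qf_def c3_def ed e1
      apply (simp only: r12 r1 r2 pa diff_self powr_0)
      apply (simp add: algebra_simps)?
      done
  qed (use al in auto)
  have E0: "\<Delta> = (b - a) * \<bar>I1 + I2\<bar>"
  proof -
    define j where "j = 1 / (b - a)"
    have bj: "(b - a) * j = 1" unfolding j_def using ab by simp
    have rj: "X / (b - a) = X * j" for X unfolding j_def by simp
    have rj2: "X / ((s + 2) * (b - a)^2) = X * i2 * j * j" for X
      unfolding j_def i2_def by (simp add: power2_eq_square)
    have rj3: "X / ((s + 2) * (b - a)) = X * i2 * j" for X
      unfolding j_def i2_def by simp
    have w: "(1 - \<alpha>) * b + (1 - (1 - \<alpha>)) * a = wam \<alpha> a b" unfolding wam_def by simp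
    have x0: "0 * b + (1 - 0) * a = a" by simp
    have x1: "1 * b + (1 - 1) * a = b" by simp
    have wp: "0 \<le> wam \<alpha> a b" unfolding wam_def using assms(6,7) ab by simp
    have pw: "wam \<alpha> a b powr (s + 2) = wam \<alpha> a b * wam \<alpha> a b powr (s + 1)" using wp by (rule pw2)
    have pA: "a powr (s + 2) = a * a powr (s + 1)" using ab by (intro pw2) auto
    have pB: "b powr (s + 2) = b * b powr (s + 1)" using ab by (intro pw2) auto
    have Lpos: "0 < (b powr (s + 2) - a powr (s + 2)) / ((s + 2) * (b - a))"
      using ab s by (intro divide_pos_pos) (auto intro!: powr_less_mono2)
    have L: "(plog_mean (s + 1) a b) powr (s + 1) = (b powr (s + 2) - a powr (s + 2)) / ((s + 2) * (b - a))"
    proof -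
      have e: "s + 1 + 1 = s + 2" by simp
      have e1: "1 / (s + 1) * (s + 1) = 1" using s by simp
      show ?thesis unfolding plog_mean_def e powr_powr e1 using powr_one[OF less_imp_le[OF Lpos]] .
    qed
    define E where "E = l * wam \<alpha> (a powr (s + 1)) (b powr (s + 1)) + (1 - l) * (wam \<alpha> a b) powr (s + 1)
                    - (plog_mean (s + 1) a b) powr (s + 1)"
    have "I1 + I2 = E * j"
      unfolding E_def I1_def I2_def Phif_def L
      apply (simp only: w x0 x1 rj rj2 rj3 pw pA pB)
      by (simp add: wam_def c_def d_def algebra_simps)
    then have "(b - a) * (I1 + I2) = ((b - a) * j) * E" by (simp add: algebra_simps)
    then have "(b - a) * (I1 + I2) = E" using bj by simp
    then have "\<bar>E\<bar> = \<bar>b - a\<bar> * \<bar>I1 + I2\<bar>" by (metis abs_mult)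
    then show ?thesis unfolding \<Delta>_def E_def[symmetric] using ab by simp
  qed
  have ba: "0 \<le> b - a" using ab by simp
  have fin: "\<Delta> \<le> (b - a) * (s + 1) * (R1 + R2)"
    if "\<bar>I1\<bar> \<le> (s + 1) * R1" "\<bar>I2\<bar> \<le> (s + 1) * R2" for R1 R2
  proof -
    have "\<Delta> \<le> (b - a) * (\<bar>I1\<bar> + \<bar>I2\<bar>)" unfolding E0 using ba
      by (intro mult_left_mono abs_triangle_ineq) 
    also have "\<dots> \<le> (b - a) * ((s + 1) * R1 + (s + 1) * R2)" using ba that
      by (intro mult_left_mono add_mono) auto
    finally show ?thesis by (simp add: algebra_simps)
  qed
  have dd: "d = 1 - l * (1 - \<alpha>)" unfolding d_def by simp
  show ?thesis
    apply (intro conjI impI)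
    subgoal by (rule fin[OF P1A P2A]) (auto simp: c_def dd)
    subgoal by (rule fin[OF P1A P2B]) (auto simp: c_def dd)
    subgoal by (rule fin[OF P1B P2A]) (auto simp: c_def dd)
    done
qed

end
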